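(* Let $a<b$ be real numbers and let $0<\alpha,\beta\leq 1$ with $1<\alpha+\beta\leq 2$. If $\lambda\in\mathbb{R}$ is an eigenvalue of the fractional boundary value problem $${}^{C}D_{b^{-}}^{\alpha}D_{a^{+}}^{\beta}u(t)=\lambda u(t),\quad a<t<b,\qquad u(a)=0,\quad D_{a^{+}}^{\beta}u(b)=0,$$ (that is, this problem has a nontrivial continuous solution $u$ on $[a,b]$), then $$|\lambda|\geq \frac{(\alpha+\beta-1)\Gamma(\alpha)\Gamma(\beta)}{(b-a)^{\alpha+\beta}}.$$
   Context: For $p>0$, the left and right Riemann--Liouville fractional integrals of a function $g$ on $[a,b]$ are $I_{a^{+}}^{p}g(t)=\frac{1}{\Gamma(p)}\int_a^t (t-s)^{p-1}g(s)\,ds$ and $I_{b^{-}}^{p}g(t)=\frac{1}{\Gamma(p)}\int_t^b (s-t)^{p-1}g(s)\,ds$. For $0<p<1$, the left Riemann--Liouville fractional derivative is $D_{a^{+}}^{p}g(t)=\frac{d}{dt}\big(I_{a^{+}}^{1-p}g\big)(t)$ and the right Caputo fractional derivative is ${}^{C}D_{b^{-}}^{p}g(t)=-I_{b^{-}}^{1-p}g'(t)$; for $p=1$ these are $D_{a^{+}}^{1}g=g'$ and ${}^{C}D_{b^{-}}^{1}g=-g'$. $\Gamma$ denotes the Gamma function. *)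

theory Defs
  imports "HOL-Analysis.Analysis"
begin

definition RL_int_left :: "real \<Rightarrow> real \<Rightarrow> (real \<Rightarrow> real) \<Rightarrow> real \<Rightarrow> real" where
  "RL_int_left p a g t = integral {a..t} (\<lambda>s. (t - s) powr (p - 1) * g s) / Gamma p"

definition RL_int_right :: "real \<Rightarrow> real \<Rightarrow> (real \<Rightarrow> real) \<Rightarrow> real \<Rightarrow> real" where
  "RL_int_right p b g t = integral {t..b} (\<lambda>s. (s - t) powr (p - 1) * g s) / Gamma p"

text \<open>The function whose ordinary derivative is the left RL derivative of order p
  (0 < p \<le> 1): I^{1-p}_{a+} g for p < 1, and g itself for p = 1.\<close>
definition RL_pre_left :: "real \<Rightarrow> real \<Rightarrow> (real \<Rightarrow> real) \<Rightarrow> real \<Rightarrow> real" where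
  "RL_pre_left p a g = (if p = 1 then g else RL_int_left (1 - p) a g)"

definition has_RL_deriv_left ::
  "real \<Rightarrow> real \<Rightarrow> (real \<Rightarrow> real) \<Rightarrow> (real \<Rightarrow> real) \<Rightarrow> real set \<Rightarrow> bool" where
  "has_RL_deriv_left p a g w S \<longleftrightarrow>
     (\<forall>t\<in>S. (RL_pre_left p a g has_real_derivative w t) (at t within S))"

text \<open>Right Caputo derivative of order p (0 < p \<le> 1) of a function whose ordinary
  derivative is g': -I^{1-p}_{b-} g' for p < 1, and -g' for p = 1.\<close>
definition caputo_right :: "real \<Rightarrow> real \<Rightarrow> (real \<Rightarrow> real) \<Rightarrow> real \<Rightarrow> real" where
  "caputo_right p b g' t = (if p = 1 then - g' t else - RL_int_right (1 - p) b g' t)"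

text \<open>Here w = D^beta_{a+} u
  (defined on all of [a,b], continuous there), w' is the ordinary derivative of w on
  (a,b), and the Caputo derivative of w is required to exist (integrability of the
  weakly singular integrand).\<close>
definition frac_eigenvalue :: "real \<Rightarrow> real \<Rightarrow> real \<Rightarrow> real \<Rightarrow> real \<Rightarrow> bool" where
  "frac_eigenvalue \<alpha> \<beta> a b lam \<longleftrightarrow>
    (\<exists>u w w'.
       continuous_on {a..b} u \<and> (\<exists>t\<in>{a..b}. u t \<noteq> 0) \<and>
       has_RL_deriv_left \<beta> a u w {a..b} \<and> continuous_on {a..b} w \<and>
       (\<forall>t\<in>{a<..<b}. (w has_real_derivative w' t) (at t)) \<and>
       (\<alpha> < 1 \<longrightarrow> (\<forall>t\<in>{a<..<b}. (\<lambda>s. (s - t) powr (- \<alpha>) * w' s) integrable_on {t..b})) \<and>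
       (\<forall>t\<in>{a<..<b}. caputo_right \<alpha> b w' t = lam * u t) \<and>
       u a = 0 \<and> w b = 0)"

end

theory Submission
  imports Defs
begin



lemma beta_int:
  fixes c d p q :: real
  assumes p: "0 < p" and q: "0 < q" and cd: "c < d"
  shows "((\<lambda>s. (s - c) powr (p - 1) * (d - s) powr (q - 1)) has_integral
           Beta p q * (d - c) powr (p + q - 1)) {c..d}"
proof -
  define m where "m = 1 / (d - c)"
  have m0: "m \<noteq> 0" using cd by (simp add: m_def)
  have B: "((\<lambda>t. t powr (p - 1) * (1 - t) powr (q - 1)) has_integral Beta p q) (cbox 0 1)"
    using has_integral_Beta_real[OF p q] by simp
  from has_integral_affinity[OF B m0, of "- c / (d - c)"]
  have H: "((\<lambda>x. (m * x + - c / (d - c)) powr (p - 1) * (1 - (m * x + - c / (d - c))) powr (q - 1))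
        has_integral (d - c) * Beta p q) ((\<lambda>x. (1 / m) * x + - ((1 / m) * (- c / (d - c)))) ` cbox 0 1)"
    using cd by (simp add: m_def)
  have img: "((\<lambda>x. (1 / m) * x + - ((1 / m) * (- c / (d - c)))) ` cbox 0 1) = {c..d}"
  proof -
    have "(\<lambda>x. (1 / m) * x + - ((1 / m) * (- c / (d - c)))) = (\<lambda>x. (d - c) * x + c)"
      using cd by (auto simp: m_def field_simps)
    moreover have "(\<lambda>x. (d - c) * x + c) ` {0..1} = {c..d}"
      using cd by (subst image_affinity_atLeastAtMost) auto
    ultimately show ?thesis by (metis cbox_interval)
  qed
  have H2: "((\<lambda>s. ((s - c) / (d - c)) powr (p - 1) * ((d - s) / (d - c)) powr (q - 1))
        has_integral (d - c) * Beta p q) {c..d}"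
  proof -
    have e1: "\<And>x. m * x + - c / (d - c) = (x - c) / (d - c)" and e2: "\<And>x. 1 - (x - c) / (d - c) = (d - x) / (d - c)"
    proof -
      have dc: "d - c \<noteq> 0" using cd by simp
      show "\<And>x. m * x + - c / (d - c) = (x - c) / (d - c)"
        by (simp add: m_def diff_divide_distrib)
      show "\<And>x. 1 - (x - c) / (d - c) = (d - x) / (d - c)"
        using dc by (simp add: diff_divide_eq_iff)
    qed
    show ?thesis using H unfolding img e1 unfolding e2 .
  qed
  have eq: "(s - c) powr (p - 1) * (d - s) powr (q - 1) =
        (d - c) powr (p + q - 2) * (((s - c) / (d - c)) powr (p - 1) * ((d - s) / (d - c)) powr (q - 1))"
    if "s \<in> {c..d}" for s
  proof -
    have "((s - c) / (d - c)) powr (p - 1) = (s - c) powr (p - 1) / (d - c) powr (p - 1)"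
      using that cd by (simp add: powr_divide)
    moreover have "((d - s) / (d - c)) powr (q - 1) = (d - s) powr (q - 1) / (d - c) powr (q - 1)"
      using that cd by (simp add: powr_divide)
    moreover have "(d - c) powr (p + q - 2) = (d - c) powr (p - 1) * (d - c) powr (q - 1)"
      using cd by (simp add: powr_add[symmetric])
    ultimately show ?thesis using cd by simp
  qed
  have "((\<lambda>s. (d - c) powr (p + q - 2) * (((s - c) / (d - c)) powr (p - 1) * ((d - s) / (d - c)) powr (q - 1)))
        has_integral (d - c) powr (p + q - 2) * ((d - c) * Beta p q)) {c..d}"
    by (rule has_integral_mult_right[OF H2])
  moreover have "(d - c) powr (p + q - 2) * ((d - c) * Beta p q) = Beta p q * (d - c) powr (p + q - 1)"
  proof -
    have "(d - c) powr (p + q - 2) * (d - c) powr 1 = (d - c) powr ((p + q - 2) + 1)"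
      by (rule powr_add[symmetric])
    then have "(d - c) powr (p + q - 1) = (d - c) powr (p + q - 2) * (d - c) powr 1"
      by (simp add: algebra_simps)
    then have "(d - c) powr (p + q - 1) = (d - c) powr (p + q - 2) * (d - c)"
      using cd by simp
    then show ?thesis by simp
  qed
  ultimately have "((\<lambda>s. (d - c) powr (p + q - 2) * (((s - c) / (d - c)) powr (p - 1) * ((d - s) / (d - c)) powr (q - 1)))
        has_integral Beta p q * (d - c) powr (p + q - 1)) {c..d}" by simp
  then show ?thesis
    by (rule has_integral_eq[rotated]) (use eq in auto)
qed

lemma prod_cont_int:
  fixes h g :: "real \<Rightarrow> real"
  assumes h: "continuous_on {c..d} h" and g: "g integrable_on {c..d}"
    and g0: "\<And>x. x \<in> {c..d} \<Longrightarrow> 0 \<le> g x"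
  shows "(\<lambda>x. h x * g x) integrable_on {c..d}"
proof -
  have ga: "g absolutely_integrable_on {c..d}"
    using g g0 absolutely_integrable_on_iff_nonneg by blast
  have hm: "h \<in> borel_measurable (lebesgue_on {c..d})"
    by (rule continuous_imp_measurable_on_sets_lebesgue[OF h]) auto
  have hb: "bounded (h ` {c..d})"
    using compact_continuous_image[OF h] compact_imp_bounded by blast
  have "(\<lambda>x. h x * g x) absolutely_integrable_on {c..d}"
    by (rule absolutely_integrable_bounded_measurable_product_real[OF hm _ hb ga]) auto
  then show ?thesis using absolutely_integrable_on_def by blast
qed

lemma prod_cont_bound:
  fixes h g :: "real \<Rightarrow> real"
  assumes h: "continuous_on {c..d} h" and g: "g integrable_on {c..d}"
    and g0: "\<And>x. x \<in> {c..d} \<Longrightarrow> 0 \<le> g x"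
    and hC: "\<And>x. x \<in> {c..d} \<Longrightarrow> \<bar>h x\<bar> \<le> C"
  shows "\<bar>integral {c..d} (\<lambda>x. h x * g x)\<bar> \<le> C * integral {c..d} g"
proof -
  have i: "(\<lambda>x. h x * g x) integrable_on {c..d}" by (rule prod_cont_int[OF h g g0])
  have "integral {c..d} (\<lambda>x. h x * g x) \<le> integral {c..d} (\<lambda>x. C * g x)"
  proof (rule integral_le[OF i])
    show "(\<lambda>x. C * g x) integrable_on {c..d}" using integrable_on_mult_right[OF g] by simp
    fix x assume "x \<in> {c..d}"
    then show "h x * g x \<le> C * g x" using hC g0 by (intro mult_right_mono) (auto simp: abs_le_iff)
  qed
  moreover have "integral {c..d} (\<lambda>x. - C * g x) \<le> integral {c..d} (\<lambda>x. h x * g x)"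
  proof (rule integral_le[OF _ i])
    show "(\<lambda>x. - C * g x) integrable_on {c..d}" using integrable_on_mult_right[OF g, of "- C"] by simp
    fix x assume "x \<in> {c..d}"
    then show "- C * g x \<le> h x * g x" using hC[of x] g0[of x] by (intro mult_right_mono) (auto simp: abs_le_iff)
  qed
  ultimately show ?thesis by (simp add: abs_le_iff)
qed

lemma marchaud:
  fixes z z' :: "real \<Rightarrow> real" and t0 b \<alpha> D :: real
  assumes tb: "t0 < b" and a0: "0 < \<alpha>" and a1: "\<alpha> < 1"
   and cont: "continuous_on {t0..b} z"
   and der: "\<And>s. s \<in> {t0<..<b} \<Longrightarrow> (z has_real_derivative z' s) (at s)"
   and der0: "(z has_real_derivative D) (at t0)"
   and mn: "\<And>s. s \<in> {t0..b} \<Longrightarrow> z t0 \<le> z s"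
   and int: "(\<lambda>s. (s - t0) powr (- \<alpha>) * z' s) integrable_on {t0..b}"
  shows "integral {t0..b} (\<lambda>s. (s - t0) powr (- \<alpha>) * z' s) \<ge> (b - t0) powr (- \<alpha>) * (z b - z t0)"
proof -
  define f where "f = (\<lambda>s. (s - t0) powr (- \<alpha>) * z' s)"
  define \<Phi> where "\<Phi> = (\<lambda>s. (s - t0) powr (- \<alpha>) * (z s - z t0))"
  have key: "integral {x..b} f \<ge> \<Phi> b - \<Phi> x" if x: "x \<in> {t0<..<b}" for x
  proof -
    have cont\<Phi>: "continuous_on {x..b} \<Phi>"
      unfolding \<Phi>_def using x
      by (intro continuous_intros continuous_on_subset[OF cont]) auto
    have der\<Phi>: "(\<Phi> has_vector_derivative
          ((- \<alpha>) * (s - t0) powr (- \<alpha> - 1) * (z s - z t0) + f s)) (at s)"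
      if s: "s \<in> {x<..<b}" for s
    proof -
      have "(\<Phi> has_real_derivative
          ((- \<alpha>) * (s - t0) powr (- \<alpha> - 1) * 1 * (z s - z t0) + (s - t0) powr (- \<alpha>) * z' s)) (at s)"
        unfolding \<Phi>_def using s x
        by (auto intro!: derivative_eq_intros der)
      then show ?thesis by (simp add: f_def has_real_derivative_iff_has_vector_derivative)
    qed
    have ftc: "((\<lambda>s. (- \<alpha>) * (s - t0) powr (- \<alpha> - 1) * (z s - z t0) + f s) has_integral \<Phi> b - \<Phi> x) {x..b}"
      using x by (intro fundamental_theorem_of_calculus_interior cont\<Phi> der\<Phi>) auto
    have fi: "f integrable_on {x..b}"
      unfolding f_def by (rule integrable_subinterval_real[OF int]) (use x in auto)
    have "((\<lambda>s. ((- \<alpha>) * (s - t0) powr (- \<alpha> - 1) * (z s - z t0) + f s) - f s) has_integral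
            (\<Phi> b - \<Phi> x) - integral {x..b} f) {x..b}"
      by (intro has_integral_diff ftc integrable_integral fi)
    then have h2: "((\<lambda>s. (- \<alpha>) * (s - t0) powr (- \<alpha> - 1) * (z s - z t0)) has_integral
            (\<Phi> b - \<Phi> x) - integral {x..b} f) {x..b}" by simp
    have "(\<Phi> b - \<Phi> x) - integral {x..b} f \<le> 0"
    proof (rule has_integral_le[OF h2 has_integral_0])
      fix s assume "s \<in> {x..b}"
      then have "z t0 \<le> z s" using mn x by auto
      moreover have "0 \<le> (s - t0) powr (- \<alpha> - 1)" by simp
      ultimately show "(- \<alpha>) * (s - t0) powr (- \<alpha> - 1) * (z s - z t0) \<le> 0"
        using a0 by (simp add: mult_nonneg_nonneg mult_nonpos_nonneg)
    qed
    then show ?thesis by simp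
  qed
  have lim1: "((\<lambda>x. integral {x..b} f) \<longlongrightarrow> integral {t0..b} f) (at_right t0)"
  proof -
    have "continuous_on {t0..b} (\<lambda>x. integral {x..b} f)"
      using int unfolding f_def by (rule indefinite_integral_continuous_1')
    then have "((\<lambda>x. integral {x..b} f) \<longlongrightarrow> integral {t0..b} f) (at t0 within {t0..b})"
      using tb by (auto simp: continuous_on_def)
    then show ?thesis using tb by (simp add: at_within_Icc_at_right)
  qed
  have lim2: "((\<lambda>x. \<Phi> b - \<Phi> x) \<longlongrightarrow> \<Phi> b - 0) (at_right t0)"
  proof (rule tendsto_diff[OF tendsto_const])
    have q: "((\<lambda>y. (z y - z t0) / (y - t0)) \<longlongrightarrow> D) (at_right t0)"
      using der0 has_field_derivative_at_within has_field_derivative_iff by blast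
    have p: "((\<lambda>y. (y - t0) powr (1 - \<alpha>)) \<longlongrightarrow> 0) (at_right t0)"
    proof (rule tendsto_zero_powrI)
      show "((\<lambda>y. y - t0) \<longlongrightarrow> 0) (at_right t0)"
        by (rule tendsto_eq_intros | simp)+
    qed (use a1 in \<open>auto simp: eventually_at_right_less eventually_at_filter\<close>)
    have "((\<lambda>y. (y - t0) powr (1 - \<alpha>) * ((z y - z t0) / (y - t0))) \<longlongrightarrow> 0 * D) (at_right t0)"
      by (rule tendsto_mult[OF p q])
    moreover have "\<forall>\<^sub>F y in at_right t0. (y - t0) powr (1 - \<alpha>) * ((z y - z t0) / (y - t0)) = \<Phi> y"
    proof -
      have "\<forall>\<^sub>F y in at_right t0. t0 < y" by (simp add: eventually_at_right_less)
      then show "\<forall>\<^sub>F y in at_right t0. (y - t0) powr (1 - \<alpha>) * ((z y - z t0) / (y - t0)) = \<Phi> y"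
      proof eventually_elim
        case (elim y)
        then have "(y - t0) powr (1 - \<alpha>) = (y - t0) powr (- \<alpha>) * (y - t0)"
          by (simp add: powr_minus divide_inverse powr_diff)
        then show ?case using elim by (simp add: \<Phi>_def)
      qed
    qed
    ultimately show "(\<Phi> \<longlongrightarrow> 0) (at_right t0)" by (simp add: tendsto_cong)
  qed
  have "\<Phi> b - 0 \<le> integral {t0..b} f"
  proof (rule tendsto_le[OF _ lim1 lim2])
    show "\<forall>\<^sub>F x in at_right t0. \<Phi> b - \<Phi> x \<le> integral {x..b} f"
    proof -
      have "\<forall>\<^sub>F x in at_right t0. x \<in> {t0<..<b}"
        using tb by (auto simp: eventually_at_right_field)
      then show ?thesis by eventually_elim (rule key)
    qed
  qed simp
  then show ?thesis by (simp add: \<Phi>_def f_def)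
qed


lemma kint:
  fixes t b \<alpha> :: real
  assumes tb: "t < b" and a1: "\<alpha> < 1"
  shows "((\<lambda>s. (s - t) powr (- \<alpha>)) has_integral (b - t) powr (1 - \<alpha>) / (1 - \<alpha>)) {t..b}"
proof -
  have "((\<lambda>s. (s - t) powr (- \<alpha>)) has_integral
      (b - t) powr (1 - \<alpha>) / (1 - \<alpha>) - (t - t) powr (1 - \<alpha>) / (1 - \<alpha>)) {t..b}"
  proof (rule fundamental_theorem_of_calculus_interior)
    show "continuous_on {t..b} (\<lambda>s. (s - t) powr (1 - \<alpha>) / (1 - \<alpha>))"
      using a1 by (intro continuous_intros continuous_on_powr') auto
    fix s assume s: "s \<in> {t<..<b}"
    have "((\<lambda>s. (s - t) powr (1 - \<alpha>) / (1 - \<alpha>)) has_real_derivative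
        (1 - \<alpha>) * (s - t) powr (1 - \<alpha> - 1) * 1 / (1 - \<alpha>)) (at s)"
      using s by (auto intro!: derivative_eq_intros)
    then show "((\<lambda>s. (s - t) powr (1 - \<alpha>) / (1 - \<alpha>)) has_vector_derivative (s - t) powr (- \<alpha>)) (at s)"
      using a1 by (simp add: has_real_derivative_iff_has_vector_derivative)
  qed (use tb in auto)
  then show ?thesis by simp
qed




lemma alpha_side:
  fixes a b \<alpha> m :: real and w w' g :: "real \<Rightarrow> real"
  assumes ab: "a < b" and a0: "0 < \<alpha>" and a1: "\<alpha> < 1"
    and wc: "continuous_on {a..b} w" and wb: "w b = 0"
    and wd: "\<And>t. t \<in> {a<..<b} \<Longrightarrow> (w has_real_derivative w' t) (at t)"
    and wi: "\<And>t. t \<in> {a<..<b} \<Longrightarrow> (\<lambda>s. (s - t) powr (- \<alpha>) * w' s) integrable_on {t..b}"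
    and we: "\<And>t. t \<in> {a<..<b} \<Longrightarrow> - integral {t..b} (\<lambda>s. (s - t) powr (- \<alpha>) * w' s) / Gamma (1 - \<alpha>) = g t"
    and gm: "\<And>t. t \<in> {a<..<b} \<Longrightarrow> g t \<le> m"
  shows "\<And>t. t \<in> {a<..<b} \<Longrightarrow> w t \<le> m * (b - t) powr \<alpha> / Gamma (\<alpha> + 1)"
proof -
  define y where "y = (\<lambda>s. (m / Gamma (\<alpha> + 1)) * (b - s) powr \<alpha>)"
  define y' where "y' = (\<lambda>s. - (m * \<alpha> / Gamma (\<alpha> + 1)) * (b - s) powr (\<alpha> - 1))"
  define \<phi> where "\<phi> = (\<lambda>s. 1 / (s - a) - 1 / (b - a))"
  define \<phi>' where "\<phi>' = (\<lambda>s. - 1 / (s - a)^2)"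
  have G1: "Gamma (1 - \<alpha>) > 0" using a1 by (intro Gamma_real_pos) auto
  have Ga: "Gamma (\<alpha> + 1) = \<alpha> * Gamma \<alpha>" using a0 by (intro Gamma_plus1) (auto elim!: nonpos_Ints_cases)
  have Gapos: "Gamma \<alpha> > 0" using a0 by (intro Gamma_real_pos)
  have Gp1: "Gamma (\<alpha> + 1) > 0" using a0 by (intro Gamma_real_pos) auto
  have yc: "continuous_on {a..b} y"
    unfolding y_def using a0 by (intro continuous_intros continuous_on_powr') auto
  have yd: "(y has_real_derivative y' s) (at s)" if "s < b" for s
  proof -
    have "(y has_real_derivative (m / Gamma (\<alpha> + 1)) * (\<alpha> * (b - s) powr (\<alpha> - 1) * (0 - 1))) (at s)"
      unfolding y_def using that Gp1 by (auto intro!: derivative_eq_intros)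
    then show ?thesis by (simp add: y'_def mult.assoc)
  qed
  have \<phi>d: "(\<phi> has_real_derivative \<phi>' s) (at s)" if "a < s" for s
  proof -
    have "(\<phi> has_real_derivative - (1 * 1 / (s - a)^2) - 0) (at s)"
      unfolding \<phi>_def using that by (auto intro!: derivative_eq_intros simp: power2_eq_square)
    then show ?thesis by (simp add: \<phi>'_def)
  qed
  have \<phi>c: "continuous_on {c..b} \<phi>" if "a < c" for c
    unfolding \<phi>_def using that by (intro continuous_intros) auto
  have zpos: "y t - w t + \<epsilon> * \<phi> t \<ge> 0" if ep: "\<epsilon> > 0" and t1: "t1 \<in> {a<..<b}" and "t = t1" for \<epsilon> t t1
  proof (rule ccontr)
    define z where "z = (\<lambda>s. y s - w s + \<epsilon> * \<phi> s)"
    define z' where "z' = (\<lambda>s. y' s - w' s + \<epsilon> * \<phi>' s)"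
    assume "\<not> ?thesis"
    then have zt1: "z t1 < 0" using that by (simp add: z_def)
    obtain K where K: "\<And>s. s \<in> {a..b} \<Longrightarrow> \<bar>y s - w s\<bar> \<le> K"
    proof -
      have "continuous_on {a..b} (\<lambda>s. y s - w s)" by (intro continuous_intros yc wc)
      then have "bounded ((\<lambda>s. y s - w s) ` {a..b})"
        using compact_continuous_image compact_imp_bounded by blast
      then show ?thesis using that unfolding bounded_real by (metis atLeastAtMost_iff imageI)
    qed
    define \<delta> where "\<delta> = 1 / (\<bar>K\<bar> / \<epsilon> + 1 / (b - a) + 1)"
    have den: "\<bar>K\<bar> / \<epsilon> + 1 / (b - a) + 1 > 0"
    proof -
      have "\<bar>K\<bar> / \<epsilon> \<ge> 0" "1 / (b - a) > 0" using ep ab by auto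
      then show ?thesis by linarith
    qed
    have \<delta>0: "\<delta> > 0" unfolding \<delta>_def using den by simp
    have near: "z s \<ge> 0" if s: "s \<in> {a<..b}" "s \<le> a + \<delta>" for s
    proof -
      have "1 / (s - a) \<ge> 1 / \<delta>" using s \<delta>0 by (intro divide_left_mono) auto
      also have "1 / \<delta> = \<bar>K\<bar> / \<epsilon> + 1 / (b - a) + 1" unfolding \<delta>_def using den by simp
      finally have "\<epsilon> * \<phi> s \<ge> \<epsilon> * (\<bar>K\<bar> / \<epsilon> + 1)" unfolding \<phi>_def using ep
        by (intro mult_left_mono) auto
      then have "\<epsilon> * \<phi> s \<ge> \<bar>K\<bar> + \<epsilon>" using ep by (simp add: algebra_simps)
      moreover have "y s - w s \<ge> - \<bar>K\<bar>" using K[of s] s by auto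
      ultimately show ?thesis unfolding z_def using ep by linarith
    qed
    have t1far: "a + \<delta> < t1" using near[of t1] zt1 t1 by force
    define c where "c = a + \<delta>"
    have ac: "a < c" "c < t1" using \<delta>0 t1far by (auto simp: c_def)
    have zc: "continuous_on {c..b} z"
      unfolding z_def using ac ab
      by (intro continuous_intros \<phi>c continuous_on_subset[OF yc] continuous_on_subset[OF wc]) auto
    obtain t0 where t0: "t0 \<in> {c..b}" and t0m: "\<And>s. s \<in> {c..b} \<Longrightarrow> z t0 \<le> z s"
      using continuous_attains_inf[OF compact_Icc _ zc] ac t1 by fastforce
    have zt0: "z t0 < 0" using t0m[of t1] zt1 ac t1 by auto
    have "z c \<ge> 0" using near[of c] ac ab t1 by (auto simp: c_def)
    then have "t0 \<noteq> c" using zt0 by auto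
    moreover have zb: "z b = 0" by (simp add: z_def y_def \<phi>_def wb)
    then have "t0 \<noteq> b" using zt0 by auto
    ultimately have t0i: "t0 \<in> {c<..<b}" using t0 by auto
    then have t0ab: "t0 \<in> {a<..<b}" using ac by auto
    have zd: "(z has_real_derivative z' s) (at s)" if "s \<in> {a<..<b}" for s
      unfolding z_def z'_def using that
      by (auto intro!: derivative_eq_intros yd \<phi>d wd)
    have Iy: "((\<lambda>s. (s - t0) powr (- \<alpha>) * y' s) has_integral - m * Gamma (1 - \<alpha>)) {t0..b}"
    proof -
      have B: "((\<lambda>s. (s - t0) powr (1 - \<alpha> - 1) * (b - s) powr (\<alpha> - 1)) has_integral
          Beta (1 - \<alpha>) \<alpha> * (b - t0) powr (1 - \<alpha> + \<alpha> - 1)) {t0..b}"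
        using beta_int[of "1 - \<alpha>" \<alpha> t0 b] a0 a1 t0i by auto
      have "Beta (1 - \<alpha>) \<alpha> = Gamma (1 - \<alpha>) * Gamma \<alpha>" by (simp add: Beta_def)
      then have B2: "((\<lambda>s. (s - t0) powr (- \<alpha>) * (b - s) powr (\<alpha> - 1)) has_integral
          Gamma (1 - \<alpha>) * Gamma \<alpha>) {t0..b}" using B t0i by simp
      have "((\<lambda>s. - (m * \<alpha> / Gamma (\<alpha> + 1)) * ((s - t0) powr (- \<alpha>) * (b - s) powr (\<alpha> - 1))) has_integral
          - (m * \<alpha> / Gamma (\<alpha> + 1)) * (Gamma (1 - \<alpha>) * Gamma \<alpha>)) {t0..b}"
        by (rule has_integral_mult_right[OF B2])
      moreover have "- (m * \<alpha> / Gamma (\<alpha> + 1)) * (Gamma (1 - \<alpha>) * Gamma \<alpha>) = - m * Gamma (1 - \<alpha>)"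
        using Ga a0 Gapos by (simp add: field_simps less_imp_neq[OF Gapos, symmetric])
      ultimately show ?thesis by (simp add: y'_def mult_ac)
    qed
    have Iw: "((\<lambda>s. (s - t0) powr (- \<alpha>) * w' s) has_integral - Gamma (1 - \<alpha>) * g t0) {t0..b}"
    proof -
      have "integral {t0..b} (\<lambda>s. (s - t0) powr (- \<alpha>) * w' s) = - Gamma (1 - \<alpha>) * g t0"
        using we[OF t0ab] G1 by (simp add: field_simps)
      then show ?thesis using wi[OF t0ab] by (metis has_integral_integrable_integral)
    qed
    obtain I\<phi> where I\<phi>: "((\<lambda>s. (s - t0) powr (- \<alpha>) * \<phi>' s) has_integral I\<phi>) {t0..b}" and I\<phi>0: "I\<phi> \<le> 0"
    proof -
      have kin: "(\<lambda>s. (s - t0) powr (- \<alpha>)) integrable_on {t0..b}"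
        using kint[of t0 b \<alpha>] t0i a1 by auto
      have "continuous_on {t0..b} \<phi>'" unfolding \<phi>'_def using t0ab by (intro continuous_intros) auto
      then have "(\<lambda>s. \<phi>' s * (s - t0) powr (- \<alpha>)) integrable_on {t0..b}"
        by (rule prod_cont_int[OF _ kin]) simp
      then have i: "(\<lambda>s. (s - t0) powr (- \<alpha>) * \<phi>' s) integrable_on {t0..b}" by (simp add: mult.commute)
      have "integral {t0..b} (\<lambda>s. (s - t0) powr (- \<alpha>) * \<phi>' s) \<le> 0"
        using integral_le[OF i integrable_0] by (force simp: \<phi>'_def mult_nonneg_nonpos)
      then show ?thesis using that i by blast
    qed
    have Iz: "((\<lambda>s. (s - t0) powr (- \<alpha>) * z' s) has_integral
        - m * Gamma (1 - \<alpha>) - (- Gamma (1 - \<alpha>) * g t0) + \<epsilon> * I\<phi>) {t0..b}"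
    proof -
      have "((\<lambda>s. (s - t0) powr (- \<alpha>) * y' s - (s - t0) powr (- \<alpha>) * w' s + \<epsilon> * ((s - t0) powr (- \<alpha>) * \<phi>' s))
          has_integral - m * Gamma (1 - \<alpha>) - (- Gamma (1 - \<alpha>) * g t0) + \<epsilon> * I\<phi>) {t0..b}"
        by (intro has_integral_add has_integral_diff has_integral_mult_right Iy Iw I\<phi>)
      then show ?thesis by (simp add: z'_def algebra_simps)
    qed
    have upper: "- m * Gamma (1 - \<alpha>) - (- Gamma (1 - \<alpha>) * g t0) + \<epsilon> * I\<phi> \<le> 0"
    proof -
      have "Gamma (1 - \<alpha>) * g t0 \<le> Gamma (1 - \<alpha>) * m" using gm[OF t0ab] G1 by simp
      moreover have "\<epsilon> * I\<phi> \<le> 0" using ep I\<phi>0 by (simp add: mult_nonneg_nonpos)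
      ultimately show ?thesis by (simp add: algebra_simps)
    qed
    have "integral {t0..b} (\<lambda>s. (s - t0) powr (- \<alpha>) * z' s) \<ge> (b - t0) powr (- \<alpha>) * (z b - z t0)"
    proof (rule marchaud[OF _ a0 a1])
      show "t0 < b" using t0i by auto
      show "continuous_on {t0..b} z" by (rule continuous_on_subset[OF zc]) (use t0 in auto)
      show "\<And>s. s \<in> {t0<..<b} \<Longrightarrow> (z has_real_derivative z' s) (at s)" using zd t0ab by auto
      show "(z has_real_derivative z' t0) (at t0)" using zd t0ab by auto
      show "\<And>s. s \<in> {t0..b} \<Longrightarrow> z t0 \<le> z s" using t0m t0 by auto
      show "(\<lambda>s. (s - t0) powr (- \<alpha>) * z' s) integrable_on {t0..b}" using Iz by blast
    qed
    moreover have "(b - t0) powr (- \<alpha>) * (z b - z t0) > 0" using zb zt0 t0i by (simp add: mult_pos_neg)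
    ultimately show False using Iz upper by (simp add: integral_unique)
  qed
  fix t assume t: "t \<in> {a<..<b}"
  show "w t \<le> m * (b - t) powr \<alpha> / Gamma (\<alpha> + 1)"
  proof (rule ccontr)
    assume "\<not> ?thesis"
    then have d: "w t - y t > 0" by (simp add: y_def)
    have \<phi>0: "\<phi> t \<ge> 0" using t ab unfolding \<phi>_def by (auto intro!: divide_left_mono)
    define \<epsilon> where "\<epsilon> = (w t - y t) / (\<phi> t + 1)"
    have ep: "\<epsilon> > 0" using d \<phi>0 by (simp add: \<epsilon>_def)
    have "\<epsilon> * \<phi> t < w t - y t"
    proof -
      have "\<epsilon> * \<phi> t < \<epsilon> * (\<phi> t + 1)" using ep by simp
      also have "\<dots> = w t - y t" using \<phi>0 by (simp add: \<epsilon>_def)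
      finally show ?thesis .
    qed
    then show False using zpos[OF ep t refl] by simp
  qed
qed




lemma kerL:
  fixes a r \<beta> :: real
  assumes ar: "a \<le> r" and b1: "\<beta> < 1"
  shows "((\<lambda>s. (r - s) powr (- \<beta>)) has_integral (r - a) powr (1 - \<beta>) / (1 - \<beta>)) {a..r}"
proof -
  have "((\<lambda>s. (r - s) powr (- \<beta>)) has_integral
      (- ((r - r) powr (1 - \<beta>) / (1 - \<beta>))) - (- ((r - a) powr (1 - \<beta>) / (1 - \<beta>)))) {a..r}"
  proof (rule fundamental_theorem_of_calculus_interior)
    show "continuous_on {a..r} (\<lambda>s. - ((r - s) powr (1 - \<beta>) / (1 - \<beta>)))"
      using b1 by (intro continuous_intros continuous_on_powr') auto
    fix s assume s: "s \<in> {a<..<r}"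
    have "((\<lambda>s. - ((r - s) powr (1 - \<beta>) / (1 - \<beta>))) has_real_derivative
        - ((1 - \<beta>) * (r - s) powr (1 - \<beta> - 1) * (0 - 1) / (1 - \<beta>))) (at s)"
      using s by (auto intro!: derivative_eq_intros)
    then show "((\<lambda>s. - ((r - s) powr (1 - \<beta>) / (1 - \<beta>))) has_vector_derivative (r - s) powr (- \<beta>)) (at s)"
      using b1 by (simp add: has_real_derivative_iff_has_vector_derivative)
  qed (use ar in auto)
  then show ?thesis by simp
qed

lemma kerR:
  fixes a t \<beta> :: real
  assumes at: "a \<le> t" and b0: "0 < \<beta>"
  shows "((\<lambda>r. (t - r) powr (\<beta> - 1)) has_integral (t - a) powr \<beta> / \<beta>) {a..t}"
  using kerL[of a t "1 - \<beta>"] assms by simp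

lemma mono_inner:
  fixes a r \<beta> :: real and n :: nat
  assumes ar: "a \<le> r" and b0: "0 < \<beta>" and b1: "\<beta> < 1"
  shows "((\<lambda>s. (r - s) powr (- \<beta>) * (s - a) ^ n) has_integral
          Beta (real n + 1) (1 - \<beta>) * (r - a) powr (real n + 1 - \<beta>)) {a..r}"
proof (cases "a = r")
  case True
  then show ?thesis by auto
next
  case False
  then have ar': "a < r" using ar by simp
  have B: "((\<lambda>s. (s - a) powr (real n + 1 - 1) * (r - s) powr (1 - \<beta> - 1)) has_integral
      Beta (real n + 1) (1 - \<beta>) * (r - a) powr (real n + 1 + (1 - \<beta>) - 1)) {a..r}"
    using beta_int[of "real n + 1" "1 - \<beta>" a r] ar' b1 by auto
  have "((\<lambda>s. (r - s) powr (- \<beta>) * (s - a) ^ n) has_integral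
      Beta (real n + 1) (1 - \<beta>) * (r - a) powr (real n + 1 + (1 - \<beta>) - 1)) {a..r}"
  proof (subst has_integral_spike_finite_eq[of "{a}"])
    show "((\<lambda>s. (s - a) powr (real n + 1 - 1) * (r - s) powr (1 - \<beta> - 1)) has_integral
      Beta (real n + 1) (1 - \<beta>) * (r - a) powr (real n + 1 + (1 - \<beta>) - 1)) {a..r}" by (rule B)
    fix s assume "s \<in> {a..r} - {a}"
    then have "s - a > 0" by auto
    then show "(s - a) powr (real n + 1 - 1) * (r - s) powr (1 - \<beta> - 1) = (r - s) powr (- \<beta>) * (s - a) ^ n"
      by (simp add: powr_realpow)
  qed auto
  then show ?thesis by (simp add: algebra_simps)
qed

lemma mono_outer:
  fixes a t \<beta> :: real and n :: nat
  assumes at: "a < t" and b0: "0 < \<beta>" and b1: "\<beta> < 1"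
  shows "((\<lambda>r. (t - r) powr (\<beta> - 1) * (Beta (real n + 1) (1 - \<beta>) * (r - a) powr (real n + 1 - \<beta>))) has_integral
          Beta \<beta> (1 - \<beta>) * ((t - a) ^ (n + 1) / (real n + 1))) {a..t}"
proof -
  have B: "((\<lambda>r. (r - a) powr (real n + 2 - \<beta> - 1) * (t - r) powr (\<beta> - 1)) has_integral
      Beta (real n + 2 - \<beta>) \<beta> * (t - a) powr (real n + 2 - \<beta> + \<beta> - 1)) {a..t}"
    using beta_int[of "real n + 2 - \<beta>" \<beta> a t] at b0 b1 by auto
  have B2: "((\<lambda>r. (t - r) powr (\<beta> - 1) * (r - a) powr (real n + 1 - \<beta>)) has_integral
      Beta (real n + 2 - \<beta>) \<beta> * (t - a) ^ (n + 1)) {a..t}"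
  proof -
    have e2: "(t - a) powr (real n + 2 - \<beta> + \<beta> - 1) = (t - a) ^ (n + 1)"
    proof -
      have "real n + 2 - \<beta> + \<beta> - 1 = real (n + 1)" by simp
      then show ?thesis using at by (simp only: powr_realpow)
    qed
    have e1: "real n + 2 - \<beta> - 1 = real n + 1 - \<beta>" by simp
    have "((\<lambda>r. (r - a) powr (real n + 1 - \<beta>) * (t - r) powr (\<beta> - 1)) has_integral
      Beta (real n + 2 - \<beta>) \<beta> * (t - a) ^ (n + 1)) {a..t}"
      using B unfolding e1 e2 .
    then show ?thesis by (rule has_integral_eq[rotated]) (simp add: mult.commute)
  qed
  have eq: "Beta (real n + 1) (1 - \<beta>) * Beta (real n + 2 - \<beta>) \<beta> = Beta \<beta> (1 - \<beta>) / (real n + 1)"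
  proof -
    define X where "X = Gamma (real n + 2 - \<beta>)"
    define Y where "Y = Gamma (real n + 1)"
    have X0: "X \<noteq> 0" unfolding X_def using b1 by (intro less_imp_neq[symmetric] Gamma_real_pos) auto
    have Y0: "Y \<noteq> 0" unfolding Y_def by (intro less_imp_neq[symmetric] Gamma_real_pos) auto
    have "Gamma (real n + 1 + 1) = (real n + 1) * Gamma (real n + 1)"
      by (rule Gamma_plus1) (auto elim!: nonpos_Ints_cases)
    then have G2: "Gamma (real n + 2) = (real n + 1) * Y"
      by (simp add: add.assoc Y_def)
    have h1: "real n + 1 + (1 - \<beta>) = real n + 2 - \<beta>" by simp
    have h2: "real n + 2 - \<beta> + \<beta> = real n + 2" by simp
    have h3: "\<beta> + (1 - \<beta>) = 1" by simp
    have "Beta (real n + 1) (1 - \<beta>) * Beta (real n + 2 - \<beta>) \<beta>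
        = (Y * Gamma (1 - \<beta>) / X) * (X * Gamma \<beta> / ((real n + 1) * Y))"
      unfolding Beta_def h1 h2 G2 X_def[symmetric] Y_def[symmetric] ..
    also have "\<dots> = Gamma \<beta> * Gamma (1 - \<beta>) / (real n + 1)"
      using X0 Y0 by (simp add: divide_simps)
    also have "\<dots> = Beta \<beta> (1 - \<beta>) / (real n + 1)"
      unfolding Beta_def h3 by simp
    finally show ?thesis .
  qed
  have "((\<lambda>r. Beta (real n + 1) (1 - \<beta>) * ((t - r) powr (\<beta> - 1) * (r - a) powr (real n + 1 - \<beta>))) has_integral
          Beta (real n + 1) (1 - \<beta>) * (Beta (real n + 2 - \<beta>) \<beta> * (t - a) ^ (n + 1))) {a..t}"
    by (rule has_integral_mult_right[OF B2])
  then show ?thesis using eq by (simp add: mult_ac)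
qed




lemma mono_int:
  fixes a t :: real and i :: nat
  assumes at: "a \<le> t"
  shows "((\<lambda>s. (s - a) ^ i) has_integral (t - a) ^ (i + 1) / (real i + 1)) {a..t}"
proof -
  have "((\<lambda>s. (s - a) ^ i) has_integral (t - a) ^ (i + 1) / (real i + 1) - (a - a) ^ (i + 1) / (real i + 1)) {a..t}"
  proof (rule fundamental_theorem_of_calculus)
    fix s assume "s \<in> {a..t}"
    have "((\<lambda>s::real. (s - a) ^ Suc i) has_real_derivative real (Suc i) * (s - a) ^ i) (at s within {a..t})"
      by (rule derivative_eq_intros refl | simp)+
    then have "((\<lambda>s::real. (s - a) ^ Suc i / real (Suc i)) has_real_derivative real (Suc i) * (s - a) ^ i / real (Suc i)) (at s within {a..t})"
      by (rule DERIV_cdivide)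
    then show "((\<lambda>s. (s - a) ^ (i + 1) / (real i + 1)) has_vector_derivative (s - a) ^ i) (at s within {a..t})"
      by (simp add: add.commute has_real_derivative_iff_has_vector_derivative)
  qed (use at in auto)
  then show ?thesis by simp
qed

lemma fub:
  fixes a t \<beta> :: real and Z :: "real \<Rightarrow> real"
  assumes at: "a < t" and b0: "0 < \<beta>" and b1: "\<beta> < 1"
    and Zc: "continuous_on {a..t} Z"
    and Pc: "continuous_on {a..t} (\<lambda>r. integral {a..r} (\<lambda>s. (r - s) powr (- \<beta>) * Z s))"
  shows "integral {a..t} (\<lambda>r. (t - r) powr (\<beta> - 1) * integral {a..r} (\<lambda>s. (r - s) powr (- \<beta>) * Z s))
         = Beta \<beta> (1 - \<beta>) * integral {a..t} Z"
proof -
  define PZ where "PZ = (\<lambda>r. integral {a..r} (\<lambda>s. (r - s) powr (- \<beta>) * Z s))"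
  define L where "L = integral {a..t} (\<lambda>r. (t - r) powr (\<beta> - 1) * PZ r)"
  define B where "B = Beta \<beta> (1 - \<beta>)"
  define R where "R = B * integral {a..t} Z"
  define C1 where "C1 = (t - a) powr (1 - \<beta>) / (1 - \<beta>)"
  define Kc where "Kc = C1 * ((t - a) powr \<beta> / \<beta>) + B * (t - a)"
  have B0: "B > 0" unfolding B_def Beta_def using b0 b1 by (auto intro!: divide_pos_pos mult_pos_pos Gamma_real_pos)
  have C10: "C1 \<ge> 0" unfolding C1_def using b1 by simp
  have Kc0: "Kc \<ge> 0" unfolding Kc_def using C10 B0 at b0 by (auto intro!: add_nonneg_nonneg mult_nonneg_nonneg)
  have kR: "(\<lambda>r. (t - r) powr (\<beta> - 1)) integrable_on {a..t}"
    using kerR[of a t \<beta>] at b0 by auto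
  have kRv: "integral {a..t} (\<lambda>r. (t - r) powr (\<beta> - 1)) = (t - a) powr \<beta> / \<beta>"
    using kerR[of a t \<beta>] at b0 by (auto intro: integral_unique)
  have main: "\<bar>L - R\<bar> \<le> \<epsilon> * Kc" if ep: "\<epsilon> > 0" for \<epsilon>
  proof -
    obtain g where gp: "real_polynomial_function g" and gZ: "\<And>x. x \<in> {a..t} \<Longrightarrow> \<bar>Z x - g x\<bar> < \<epsilon>"
      using Stone_Weierstrass_real_polynomial_function[OF compact_Icc Zc ep] by blast
    have "real_polynomial_function (g \<circ> (\<lambda>x. x + a))"
      using gp by (intro real_polynomial_function_compose) auto
    then obtain c N where cN: "g \<circ> (\<lambda>x. x + a) = (\<lambda>x. \<Sum>i\<le>N. c i * x ^ i)"
      unfolding real_polynomial_function_iff_sum by blast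
    have gs: "g s = (\<Sum>i\<le>N. c i * (s - a) ^ i)" for s
      using fun_cong[OF cN, of "s - a"] by simp
    have gfun: "g = (\<lambda>s. \<Sum>i\<le>N. c i * (s - a) ^ i)" by (rule ext) (simp add: gs)
    define PQ where "PQ = (\<lambda>r. \<Sum>i\<le>N. c i * (Beta (real i + 1) (1 - \<beta>) * (r - a) powr (real i + 1 - \<beta>)))"
    define IQ where "IQ = (\<Sum>i\<le>N. c i * ((t - a) ^ (i + 1) / (real i + 1)))"
    have PQi: "((\<lambda>s. (r - s) powr (- \<beta>) * g s) has_integral PQ r) {a..r}" if r: "r \<in> {a..t}" for r
    proof -
      have "((\<lambda>s. \<Sum>i\<le>N. c i * ((r - s) powr (- \<beta>) * (s - a) ^ i)) has_integral PQ r) {a..r}"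
        unfolding PQ_def using r b0 b1
        by (intro has_integral_sum has_integral_mult_right mono_inner) auto
      then show ?thesis by (simp add: gs sum_distrib_left mult_ac)
    qed
    have LQ: "((\<lambda>r. (t - r) powr (\<beta> - 1) * PQ r) has_integral B * IQ) {a..t}"
    proof -
      have "((\<lambda>r. \<Sum>i\<le>N. c i * ((t - r) powr (\<beta> - 1) * (Beta (real i + 1) (1 - \<beta>) * (r - a) powr (real i + 1 - \<beta>))))
          has_integral (\<Sum>i\<le>N. c i * (B * ((t - a) ^ (i + 1) / (real i + 1))))) {a..t}"
        unfolding B_def using at b0 b1
        by (intro has_integral_sum has_integral_mult_right mono_outer) auto
      then show ?thesis by (simp add: PQ_def IQ_def sum_distrib_left mult_ac)
    qed
    have IQi: "(g has_integral IQ) {a..t}"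
    proof -
      have "((\<lambda>s. \<Sum>i\<le>N. c i * (s - a) ^ i) has_integral IQ) {a..t}"
        unfolding IQ_def using at by (intro has_integral_sum has_integral_mult_right mono_int) auto
      then show ?thesis by (simp add: gfun)
    qed
    have gc: "continuous_on {a..t} g"
      unfolding gfun by (intro continuous_intros)
    have PQc: "continuous_on {a..t} PQ"
      unfolding PQ_def using b1
      by (intro continuous_intros continuous_on_powr') auto
    have dP: "\<bar>PZ r - PQ r\<bar> \<le> \<epsilon> * C1" if r: "r \<in> {a..t}" for r
    proof -
      have kL: "((\<lambda>s. (r - s) powr (- \<beta>)) has_integral (r - a) powr (1 - \<beta>) / (1 - \<beta>)) {a..r}"
        using kerL[of a r \<beta>] r b1 by auto
      have hc: "continuous_on {a..r} (\<lambda>s. Z s - g s)"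
        using r by (intro continuous_intros continuous_on_subset[OF Zc] continuous_on_subset[OF gc]) auto
      have Zi: "(\<lambda>s. Z s * (r - s) powr (- \<beta>)) integrable_on {a..r}"
        using r by (intro prod_cont_int[OF continuous_on_subset[OF Zc]]) (use kL in auto)
      have "PZ r - PQ r = integral {a..r} (\<lambda>s. (Z s - g s) * (r - s) powr (- \<beta>))"
      proof -
        have "integral {a..r} (\<lambda>s. (Z s - g s) * (r - s) powr (- \<beta>)) =
            integral {a..r} (\<lambda>s. Z s * (r - s) powr (- \<beta>) - (r - s) powr (- \<beta>) * g s)"
          by (simp add: algebra_simps)
        also have "\<dots> = integral {a..r} (\<lambda>s. Z s * (r - s) powr (- \<beta>)) - integral {a..r} (\<lambda>s. (r - s) powr (- \<beta>) * g s)"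
          by (rule integral_diff[OF Zi]) (use PQi[OF r] in blast)
        also have "\<dots> = PZ r - PQ r"
          using PQi[OF r] by (simp add: PZ_def integral_unique mult.commute)
        finally show ?thesis by simp
      qed
      also have "\<bar>\<dots>\<bar> \<le> \<epsilon> * integral {a..r} (\<lambda>s. (r - s) powr (- \<beta>))"
        by (rule prod_cont_bound[OF hc]) (use kL gZ r in \<open>auto intro: less_imp_le\<close>)
      also have "\<dots> = \<epsilon> * ((r - a) powr (1 - \<beta>) / (1 - \<beta>))" using kL by (simp add: integral_unique)
      also have "\<dots> \<le> \<epsilon> * C1"
        unfolding C1_def using ep r b1
        by (intro mult_left_mono divide_right_mono powr_mono2) auto
      finally show ?thesis .
    qed
    have dL: "\<bar>L - B * IQ\<bar> \<le> \<epsilon> * C1 * ((t - a) powr \<beta> / \<beta>)"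
    proof -
      have LZi: "(\<lambda>r. PZ r * (t - r) powr (\<beta> - 1)) integrable_on {a..t}"
        by (rule prod_cont_int[OF _ kR]) (use Pc in \<open>auto simp: PZ_def\<close>)
      have "L - B * IQ = integral {a..t} (\<lambda>r. (PZ r - PQ r) * (t - r) powr (\<beta> - 1))"
      proof -
        have "integral {a..t} (\<lambda>r. (PZ r - PQ r) * (t - r) powr (\<beta> - 1)) =
            integral {a..t} (\<lambda>r. PZ r * (t - r) powr (\<beta> - 1) - (t - r) powr (\<beta> - 1) * PQ r)"
          by (simp add: algebra_simps)
        also have "\<dots> = integral {a..t} (\<lambda>r. PZ r * (t - r) powr (\<beta> - 1)) - integral {a..t} (\<lambda>r. (t - r) powr (\<beta> - 1) * PQ r)"
          by (rule integral_diff[OF LZi]) (use LQ in blast)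
        also have "\<dots> = L - B * IQ"
          using LQ by (simp add: L_def integral_unique mult.commute)
        finally show ?thesis by simp
      qed
      also have "\<bar>\<dots>\<bar> \<le> (\<epsilon> * C1) * integral {a..t} (\<lambda>r. (t - r) powr (\<beta> - 1))"
        by (rule prod_cont_bound[OF _ kR]) (use Pc PQc dP in \<open>auto simp: PZ_def intro!: continuous_intros\<close>)
      finally show ?thesis using kRv by simp
    qed
    have dI: "\<bar>IQ - integral {a..t} Z\<bar> \<le> \<epsilon> * (t - a)"
    proof -
      have "integral {a..t} (\<lambda>s. Z s - g s) = integral {a..t} Z - integral {a..t} g"
        using IQi integrable_continuous_interval[OF Zc] by (intro integral_diff) auto
      then have "integral {a..t} Z - IQ = integral {a..t} (\<lambda>s. (Z s - g s) * 1)"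
        using IQi by (simp add: integral_unique)
      moreover have "\<bar>integral {a..t} (\<lambda>s. (Z s - g s) * 1)\<bar> \<le> \<epsilon> * integral {a..t} (\<lambda>s. 1)"
        by (rule prod_cont_bound) (use gZ in \<open>auto intro!: continuous_intros Zc gc less_imp_le\<close>)
      ultimately show ?thesis using at by (simp add: abs_minus_commute)
    qed
    have "\<bar>L - R\<bar> \<le> \<bar>L - B * IQ\<bar> + B * \<bar>IQ - integral {a..t} Z\<bar>"
    proof -
      have "L - R = (L - B * IQ) + B * (IQ - integral {a..t} Z)" by (simp add: R_def algebra_simps)
      then have "\<bar>L - R\<bar> \<le> \<bar>L - B * IQ\<bar> + \<bar>B * (IQ - integral {a..t} Z)\<bar>"
        using abs_triangle_ineq by metis
      then show ?thesis using B0 by (simp add: abs_mult)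
    qed
    also have "\<dots> \<le> \<epsilon> * C1 * ((t - a) powr \<beta> / \<beta>) + B * (\<epsilon> * (t - a))"
      using dL dI B0 by (intro add_mono mult_left_mono) auto
    also have "\<dots> = \<epsilon> * Kc" by (simp add: Kc_def algebra_simps)
    finally show ?thesis .
  qed
  have "L = R"
  proof (rule ccontr)
    assume ne: "L \<noteq> R"
    define \<epsilon> where "\<epsilon> = \<bar>L - R\<bar> / (Kc + 1)"
    have ep: "\<epsilon> > 0" using ne Kc0 by (simp add: \<epsilon>_def)
    have "\<epsilon> * Kc < \<epsilon> * (Kc + 1)" using ep by simp
    also have "\<dots> = \<bar>L - R\<bar>" using Kc0 by (simp add: \<epsilon>_def)
    finally show False using main[OF ep] by simp
  qed
  then show ?thesis by (simp add: L_def R_def PZ_def B_def)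
qed




lemma subst_refl:
  fixes a t \<beta> :: real and P :: "real \<Rightarrow> real"
  assumes at: "a \<le> t" and b0: "0 < \<beta>" and Pc: "continuous_on {a..t} P"
  shows "(\<lambda>x. x powr (\<beta> - 1) * P (t - x)) integrable_on {0..t - a}"
    and "((\<lambda>r. (t - r) powr (\<beta> - 1) * P r) has_integral
           integral {0..t - a} (\<lambda>x. x powr (\<beta> - 1) * P (t - x))) {a..t}"
proof -
  have k: "(\<lambda>x. x powr (\<beta> - 1)) integrable_on {0..t - a}"
  proof (cases "a = t")
    case True then show ?thesis using integrable_on_refl[of _ 0] by simp
  next
    case False
    then show ?thesis using kint[of 0 "t - a" "1 - \<beta>"] at b0 by auto
  qed
  have Pc': "continuous_on {0..t - a} (\<lambda>x. P (t - x))"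
    by (rule continuous_on_compose2[OF Pc]) (auto intro!: continuous_intros)
  have "(\<lambda>x. P (t - x) * x powr (\<beta> - 1)) integrable_on {0..t - a}"
    by (rule prod_cont_int[OF Pc' k]) simp
  then show i: "(\<lambda>x. x powr (\<beta> - 1) * P (t - x)) integrable_on {0..t - a}"
    by (simp add: mult.commute)
  define F where "F = (\<lambda>x. x powr (\<beta> - 1) * P (t - x))"
  have Fi: "(F has_integral integral {0..t - a} F) (cbox 0 (t - a))"
    using i unfolding F_def by (simp add: has_integral_integral)
  from has_integral_affinity[OF Fi, of "-1" t]
  have H: "((\<lambda>x. F (- x + t)) has_integral integral {0..t - a} F) ((\<lambda>x. - x + t) ` cbox 0 (t - a))"
    by simp
  have img: "(\<lambda>x. - x + t) ` cbox 0 (t - a) = {a..t}"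
  proof -
    have "(\<lambda>x. (- 1) * x + t) ` {0..t - a} = {a..t}"
      using at by (subst image_affinity_atLeastAtMost) auto
    then show ?thesis by simp
  qed
  have "(\<lambda>x. F (- x + t)) = (\<lambda>r. (t - r) powr (\<beta> - 1) * P r)"
    by (auto simp: F_def)
  then show "((\<lambda>r. (t - r) powr (\<beta> - 1) * P r) has_integral
           integral {0..t - a} (\<lambda>x. x powr (\<beta> - 1) * P (t - x))) {a..t}"
    using H img by (simp add: F_def)
qed

lemma Q_mono:
  fixes a t1 t2 \<beta> :: real and P :: "real \<Rightarrow> real"
  assumes at: "a \<le> t1" "t1 \<le> t2" and b0: "0 < \<beta>" and Pc: "continuous_on {a..t2} P"
    and Pm: "\<And>x y. a \<le> x \<Longrightarrow> x \<le> y \<Longrightarrow> y \<le> t2 \<Longrightarrow> P x \<le> P y"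
    and P0: "\<And>x. a \<le> x \<Longrightarrow> x \<le> t2 \<Longrightarrow> 0 \<le> P x"
  shows "integral {a..t1} (\<lambda>r. (t1 - r) powr (\<beta> - 1) * P r) \<le> integral {a..t2} (\<lambda>r. (t2 - r) powr (\<beta> - 1) * P r)"
proof -
  have Pc1: "continuous_on {a..t1} P" by (rule continuous_on_subset[OF Pc]) (use at in auto)
  note s1 = subst_refl[OF at(1) b0 Pc1]
  have at2: "a \<le> t2" using at by simp
  note s2 = subst_refl[OF at2 b0 Pc]
  have "integral {a..t1} (\<lambda>r. (t1 - r) powr (\<beta> - 1) * P r) = integral {0..t1 - a} (\<lambda>x. x powr (\<beta> - 1) * P (t1 - x))"
    using s1(2) by (rule integral_unique)
  also have "\<dots> \<le> integral {0..t1 - a} (\<lambda>x. x powr (\<beta> - 1) * P (t2 - x))"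
  proof (rule integral_le[OF s1(1)])
    show "(\<lambda>x. x powr (\<beta> - 1) * P (t2 - x)) integrable_on {0..t1 - a}"
      by (rule integrable_subinterval_real[OF s2(1)]) (use at in auto)
    fix x assume "x \<in> {0..t1 - a}"
    then show "x powr (\<beta> - 1) * P (t1 - x) \<le> x powr (\<beta> - 1) * P (t2 - x)"
      using at by (intro mult_left_mono Pm) auto
  qed
  also have "\<dots> \<le> integral {0..t2 - a} (\<lambda>x. x powr (\<beta> - 1) * P (t2 - x))"
  proof (rule integral_subset_le)
    show "(\<lambda>x. x powr (\<beta> - 1) * P (t2 - x)) integrable_on {0..t1 - a}"
      by (rule integrable_subinterval_real[OF s2(1)]) (use at in auto)
  qed (use at s2(1) P0 in auto)
  also have "\<dots> = integral {a..t2} (\<lambda>r. (t2 - r) powr (\<beta> - 1) * P r)"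
    using s2(2) by (rule integral_unique[symmetric])
  finally show ?thesis .
qed




lemma beta_side:
  fixes a b \<beta> K :: real and u v :: "real \<Rightarrow> real"
  assumes ab: "a < b" and b0: "0 < \<beta>" and b1: "\<beta> < 1"
    and uc: "continuous_on {a..b} u"
    and vd: "\<And>t. t \<in> {a..b} \<Longrightarrow> ((\<lambda>t. integral {a..t} (\<lambda>s. (t - s) powr (- \<beta>) * u s)) has_real_derivative v t) (at t within {a..b})"
    and vb: "\<And>t. t \<in> {a<..<b} \<Longrightarrow> v t \<le> K"
  shows "\<And>t. t \<in> {a..b} \<Longrightarrow> u t \<le> K / Beta (\<beta> + 1) (1 - \<beta>) * (t - a) powr \<beta>"
proof -
  define Bt where "Bt = Beta (\<beta> + 1) (1 - \<beta>)"
  have Bt0: "Bt > 0" unfolding Bt_def Beta_def using b0 b1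
    by (auto intro!: divide_pos_pos mult_pos_pos Gamma_real_pos)
  define c where "c = K / Bt"
  have cBt: "c * Bt = K" using Bt0 by (simp add: c_def)
  define V where "V = (\<lambda>t. integral {a..t} (\<lambda>s. (t - s) powr (- \<beta>) * u s))"
  define Y where "Y = (\<lambda>s. c * (s - a) powr \<beta>)"
  define Z where "Z = (\<lambda>s. Y s - u s)"
  define P where "P = (\<lambda>t. K * (t - a) - V t)"
  have Yc: "continuous_on {a..b} Y" unfolding Y_def using b0
    by (intro continuous_intros continuous_on_powr') auto
  have Zc: "continuous_on {a..b} Z" unfolding Z_def by (intro continuous_intros Yc uc)
  have Yint: "((\<lambda>s. (t - s) powr (- \<beta>) * Y s) has_integral K * (t - a)) {a..t}" if t: "t \<in> {a..b}" for t
  proof (cases "t = a")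
    case True then show ?thesis by auto
  next
    case False
    then have at: "a < t" using t by auto
    have B: "((\<lambda>s. (s - a) powr (\<beta> + 1 - 1) * (t - s) powr (1 - \<beta> - 1)) has_integral
        Beta (\<beta> + 1) (1 - \<beta>) * (t - a) powr (\<beta> + 1 + (1 - \<beta>) - 1)) {a..t}"
      using beta_int[of "\<beta> + 1" "1 - \<beta>" a t] at b0 b1 by auto
    then have "((\<lambda>s. (s - a) powr \<beta> * (t - s) powr (- \<beta>)) has_integral Bt * (t - a)) {a..t}"
      using at by (simp add: Bt_def)
    then have "((\<lambda>s. c * ((s - a) powr \<beta> * (t - s) powr (- \<beta>))) has_integral c * (Bt * (t - a))) {a..t}"
      by (rule has_integral_mult_right)
    moreover have e: "c * (Bt * (t - a)) = K * (t - a)" using cBt by (simp add: mult.assoc[symmetric])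
    ultimately have "((\<lambda>s. c * ((s - a) powr \<beta> * (t - s) powr (- \<beta>))) has_integral K * (t - a)) {a..t}"
      by (simp only: e)
    then show ?thesis by (rule has_integral_eq[rotated]) (simp add: Y_def)
  qed
  have uint: "(\<lambda>s. (t - s) powr (- \<beta>) * u s) integrable_on {a..t}" if t: "t \<in> {a..b}" for t
  proof -
    have "(\<lambda>s. u s * (t - s) powr (- \<beta>)) integrable_on {a..t}"
      by (rule prod_cont_int[OF continuous_on_subset[OF uc]]) (use kerL[of a t \<beta>] t b1 in auto)
    then show ?thesis by (simp add: mult.commute)
  qed
  have PZ: "integral {a..t} (\<lambda>s. (t - s) powr (- \<beta>) * Z s) = P t" if t: "t \<in> {a..b}" for t
  proof -
    have "integral {a..t} (\<lambda>s. (t - s) powr (- \<beta>) * Y s - (t - s) powr (- \<beta>) * u s) =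
        integral {a..t} (\<lambda>s. (t - s) powr (- \<beta>) * Y s) - integral {a..t} (\<lambda>s. (t - s) powr (- \<beta>) * u s)"
      by (rule integral_diff) (use Yint[OF t] uint[OF t] in auto)
    then show ?thesis using Yint[OF t]
      by (simp add: Z_def P_def V_def right_diff_distrib integral_unique)
  qed
  have Vc: "continuous_on {a..b} V"
    unfolding continuous_on_eq_continuous_within
    using vd unfolding V_def by (blast intro: DERIV_continuous)
  have Pc: "continuous_on {a..b} P" unfolding P_def by (intro continuous_intros Vc)
  have Pd: "(P has_real_derivative K - v t) (at t)" if t: "t \<in> {a<..<b}" for t
  proof -
    have "(V has_real_derivative v t) (at t)"
      using vd[of t] t at_within_Icc_at[of a t b] unfolding V_def by auto
    then show ?thesis unfolding P_def by (auto intro!: derivative_eq_intros)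
  qed
  have Pm: "P x \<le> P y" if "a \<le> x" "x \<le> y" "y \<le> b" for x y
  proof (rule DERIV_nonneg_imp_increasing_open[OF \<open>x \<le> y\<close>])
    fix t assume "x < t" "t < y"
    then show "\<exists>d. (P has_real_derivative d) (at t) \<and> 0 \<le> d"
      using Pd[of t] vb[of t] that by auto
  qed (rule continuous_on_subset[OF Pc], use that in auto)
  have Pa: "P a = 0" by (simp add: P_def V_def)
  have P0: "0 \<le> P x" if "a \<le> x" "x \<le> b" for x using Pm[of a x] that Pa by auto
  define B where "B = Beta \<beta> (1 - \<beta>)"
  have B0: "B > 0" unfolding B_def Beta_def using b0 b1
    by (auto intro!: divide_pos_pos mult_pos_pos Gamma_real_pos)
  have Qeq: "integral {a..t} (\<lambda>r. (t - r) powr (\<beta> - 1) * P r) = B * integral {a..t} Z"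
    if t: "a < t" "t \<le> b" for t
  proof -
    have Pc': "continuous_on {a..t} (\<lambda>r. integral {a..r} (\<lambda>s. (r - s) powr (- \<beta>) * Z s))"
      by (rule continuous_on_eq[OF continuous_on_subset[OF Pc]]) (use PZ t in auto)
    have "integral {a..t} (\<lambda>r. (t - r) powr (\<beta> - 1) * integral {a..r} (\<lambda>s. (r - s) powr (- \<beta>) * Z s))
        = B * integral {a..t} Z"
      unfolding B_def by (rule fub[OF t(1) b0 b1 continuous_on_subset[OF Zc] Pc']) (use t in auto)
    moreover have "integral {a..t} (\<lambda>r. (t - r) powr (\<beta> - 1) * integral {a..r} (\<lambda>s. (r - s) powr (- \<beta>) * Z s))
        = integral {a..t} (\<lambda>r. (t - r) powr (\<beta> - 1) * P r)"
      by (rule integral_cong) (use PZ t in auto)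
    ultimately show ?thesis by simp
  qed
  have IZm: "integral {a..t1} Z \<le> integral {a..t2} Z" if "a < t1" "t1 \<le> t2" "t2 \<le> b" for t1 t2
  proof -
    have "B * integral {a..t1} Z \<le> B * integral {a..t2} Z"
      using Q_mono[of a t1 t2 \<beta> P] Qeq[of t1] Qeq[of t2] that b0 Pm P0
        continuous_on_subset[OF Pc, of "{a..t2}"] by auto
    then show ?thesis using B0 by simp
  qed
  have Zpos: "Z t \<ge> 0" if t: "t \<in> {a<..<b}" for t
  proof (rule ccontr)
    assume "\<not> ?thesis"
    then have neg: "Z t < 0" by simp
    obtain d where d0: "d > 0" and d: "\<And>x. x \<in> {a..b} \<Longrightarrow> dist x t < d \<Longrightarrow> dist (Z x) (Z t) < - Z t / 2"
      using Zc t neg unfolding continuous_on_iff by (metis greaterThanLessThan_iff atLeastAtMost_iff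
        less_eq_real_def neg_0_less_iff_less half_gt_zero_iff divide_minus_left)
    define h where "h = min (d / 2) ((b - t) / 2)"
    have h0: "h > 0" using d0 t by (simp add: h_def)
    have "h \<le> (b - t) / 2" "h \<le> d / 2" unfolding h_def by (rule min.cobounded2, rule min.cobounded1)
    then have th: "t + h < b" "t + h - t < d" using t d0 by auto
    have Zi: "Z integrable_on {a..t + h}"
      by (rule integrable_continuous_interval[OF continuous_on_subset[OF Zc]]) (use th in auto)
    have comb: "integral {a..t} Z + integral {t..t + h} Z = integral {a..t + h} Z"
      by (rule Henstock_Kurzweil_Integration.integral_combine[OF _ _ Zi]) (use t h0 in auto)
    have "integral {t..t + h} Z \<le> integral {t..t + h} (\<lambda>_. Z t / 2)"
    proof (rule integral_le)
      show "Z integrable_on {t..t + h}"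
        by (rule integrable_subinterval_real[OF Zi]) (use t in auto)
      fix x assume x: "x \<in> {t..t + h}"
      then have "dist (Z x) (Z t) < - Z t / 2" using th t by (intro d) (auto simp: dist_real_def)
      then show "Z x \<le> Z t / 2" by (auto simp: dist_real_def)
    qed auto
    also have "\<dots> = h * (Z t / 2)" using h0 by simp
    also have "\<dots> < 0" using h0 neg by (simp add: mult_pos_neg)
    finally have "integral {a..t + h} Z < integral {a..t} Z" using comb by linarith
    moreover have "integral {a..t} Z \<le> integral {a..t + h} Z" using IZm[of t "t + h"] t th h0 by auto
    ultimately show False by simp
  qed
  fix t assume t: "t \<in> {a..b}"
  have "u t - Y t \<le> 0"
  proof (rule continuous_le_on_closure[of "{a<..<b}" "\<lambda>s. u s - Y s" t 0])
    show "continuous_on (closure {a<..<b}) (\<lambda>s. u s - Y s)"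
      using ab by (simp add: continuous_intros uc Yc)
    show "t \<in> closure {a<..<b}" using ab t by simp
    fix x assume "x \<in> {a<..<b}"
    then show "u x - Y x \<le> 0" using Zpos[of x] by (simp add: Z_def)
  qed
  then show "u t \<le> K / Beta (\<beta> + 1) (1 - \<beta>) * (t - a) powr \<beta>"
    by (simp add: Y_def c_def Bt_def)
qed




lemma alpha_bound:
  fixes a b \<alpha> lam m :: real and u w w' :: "real \<Rightarrow> real"
  assumes ab: "a < b" and a0: "0 < \<alpha>" and a1: "\<alpha> \<le> 1"
    and wc: "continuous_on {a..b} w" and wb: "w b = 0"
    and wd: "\<forall>t\<in>{a<..<b}. (w has_real_derivative w' t) (at t)"
    and wi: "\<alpha> < 1 \<longrightarrow> (\<forall>t\<in>{a<..<b}. (\<lambda>s. (s - t) powr (- \<alpha>) * w' s) integrable_on {t..b})"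
    and we: "\<forall>t\<in>{a<..<b}. caputo_right \<alpha> b w' t = lam * u t"
    and um: "\<And>t. t \<in> {a..b} \<Longrightarrow> \<bar>lam * u t\<bar> \<le> m"
  shows "\<And>t. t \<in> {a<..<b} \<Longrightarrow> \<bar>w t\<bar> \<le> m * (b - a) powr \<alpha> / Gamma (\<alpha> + 1)"
proof -
  have m0: "m \<ge> 0" using um[of a] ab by auto
  have Gp1: "Gamma (\<alpha> + 1) > 0" using a0 by (intro Gamma_real_pos) auto
  fix t assume t: "t \<in> {a<..<b}"
  have mono: "m * (b - t) powr \<alpha> / Gamma (\<alpha> + 1) \<le> m * (b - a) powr \<alpha> / Gamma (\<alpha> + 1)"
    using t m0 Gp1 a0 by (intro divide_right_mono mult_left_mono powr_mono2) auto
  show "\<bar>w t\<bar> \<le> m * (b - a) powr \<alpha> / Gamma (\<alpha> + 1)"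
  proof (cases "\<alpha> = 1")
    case False
    then have a1': "\<alpha> < 1" using a1 by simp
    have ce: "- integral {s..b} (\<lambda>x. (x - s) powr (- \<alpha>) * w' x) / Gamma (1 - \<alpha>) = lam * u s"
      if "s \<in> {a<..<b}" for s
      using we that False by (simp add: caputo_right_def RL_int_right_def)
    have gm: "lam * u s \<le> m" if "s \<in> {a<..<b}" for s
      using um[of s] that by (simp add: abs_le_iff)
    have up: "w t \<le> m * (b - t) powr \<alpha> / Gamma (\<alpha> + 1)"
      by (rule alpha_side[OF ab a0 a1' wc wb, of w' "\<lambda>s. lam * u s" m])
         (use wd wi a1' ce t gm in auto)
    have lo: "- w t \<le> m * (b - t) powr \<alpha> / Gamma (\<alpha> + 1)"
    proof (rule alpha_side[OF ab a0 a1', of "\<lambda>s. - w s" "\<lambda>s. - w' s" "\<lambda>s. - (lam * u s)" m])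
      show "continuous_on {a..b} (\<lambda>s. - w s)" by (intro continuous_intros wc)
      show "- w b = 0" using wb by simp
      show "((\<lambda>s. - w s) has_real_derivative - w' s) (at s)" if "s \<in> {a<..<b}" for s
        using wd that by (auto intro!: derivative_eq_intros)
      show "(\<lambda>x. (x - s) powr (- \<alpha>) * - w' x) integrable_on {s..b}" if "s \<in> {a<..<b}" for s
      proof -
        have "(\<lambda>x. (x - s) powr (- \<alpha>) * w' x) integrable_on {s..b}" using wi a1' that by auto
        then have "(\<lambda>x. - ((x - s) powr (- \<alpha>) * w' x)) integrable_on {s..b}" by (rule integrable_neg)
        then show ?thesis by simp
      qed
      show "- integral {s..b} (\<lambda>x. (x - s) powr (- \<alpha>) * - w' x) / Gamma (1 - \<alpha>) = - (lam * u s)"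
        if "s \<in> {a<..<b}" for s
      proof -
        have "integral {s..b} (\<lambda>x. (x - s) powr (- \<alpha>) * - w' x) = - integral {s..b} (\<lambda>x. (x - s) powr (- \<alpha>) * w' x)"
          using integral_neg[of "{s..b}" "\<lambda>x. (x - s) powr (- \<alpha>) * w' x"] by simp
        then show ?thesis using ce[OF that] by simp
      qed
      show "- (lam * u s) \<le> m" if "s \<in> {a<..<b}" for s using um[of s] that by auto
    qed (use t in auto)
    show ?thesis using up lo mono by (simp add: abs_le_iff)
  next
    case True
    have wd': "((\<lambda>s. w s + m * s) has_real_derivative w' s + m) (at s)" if "s \<in> {a<..<b}" for s
      using wd that by (auto intro!: derivative_eq_intros)
    have wd'': "((\<lambda>s. - w s + m * s) has_real_derivative - w' s + m) (at s)" if "s \<in> {a<..<b}" for s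
      using wd that by (auto intro!: derivative_eq_intros)
    have w'e: "- w' s = lam * u s" if "s \<in> {a<..<b}" for s
      using we that True by (simp add: caputo_right_def)
    have "w t + m * t \<le> w b + m * b"
    proof (rule DERIV_nonneg_imp_increasing_open[of t b "\<lambda>s. w s + m * s", simplified])
      fix s assume "t < s" "s < b"
      then show "\<exists>y. ((\<lambda>s. w s + m * s) has_real_derivative y) (at s) \<and> 0 \<le> y"
        using wd'[of s] w'e[of s] um[of s] t by (intro exI[of _ "w' s + m"]) auto
    qed (use t in \<open>auto intro!: continuous_intros continuous_on_subset[OF wc]\<close>)
    moreover have "- w t + m * t \<le> - w b + m * b"
    proof (rule DERIV_nonneg_imp_increasing_open[of t b "\<lambda>s. - w s + m * s"])
      fix s assume "t < s" "s < b"
      then show "\<exists>y. ((\<lambda>s. - w s + m * s) has_real_derivative y) (at s) \<and> 0 \<le> y"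
        using wd''[of s] w'e[of s] um[of s] t by (intro exI[of _ "- w' s + m"]) auto
    qed (use t in \<open>auto intro!: continuous_intros continuous_on_subset[OF wc]\<close>)
    ultimately have "\<bar>w t\<bar> \<le> m * (b - t)" using wb by (simp add: abs_le_iff algebra_simps)
    moreover have "Gamma (2::real) = 1" by (simp add: Gamma_numeral)
    moreover have "m * (b - t) \<le> m * (b - a)" using m0 t by (intro mult_left_mono) auto
    ultimately show ?thesis using True ab t by simp
  qed
qed




lemma beta_bound:
  fixes a b \<beta> M :: real and u w :: "real \<Rightarrow> real"
  assumes ab: "a < b" and b0: "0 < \<beta>" and b1: "\<beta> \<le> 1"
    and uc: "continuous_on {a..b} u" and ua: "u a = 0"
    and ud: "has_RL_deriv_left \<beta> a u w {a..b}"
    and wM: "\<And>t. t \<in> {a<..<b} \<Longrightarrow> \<bar>w t\<bar> \<le> M"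
  shows "\<And>t. t \<in> {a..b} \<Longrightarrow> \<bar>u t\<bar> \<le> M * (b - a) powr \<beta> / Gamma (\<beta> + 1)"
proof -
  have M0: "M \<ge> 0" using wM[of "(a + b) / 2"] ab by auto
  have Gp1: "Gamma (\<beta> + 1) > 0" using b0 by (intro Gamma_real_pos) auto
  fix t assume t: "t \<in> {a..b}"
  show "\<bar>u t\<bar> \<le> M * (b - a) powr \<beta> / Gamma (\<beta> + 1)"
  proof (cases "\<beta> = 1")
    case False
    then have b1': "\<beta> < 1" using b1 by simp
    define G where "G = Gamma (1 - \<beta>)"
    have G0: "G > 0" unfolding G_def using b1' by (intro Gamma_real_pos) auto
    define V where "V = (\<lambda>t. integral {a..t} (\<lambda>s. (t - s) powr (- \<beta>) * u s))"
    have pre: "RL_pre_left \<beta> a u = (\<lambda>t. V t / G)"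
      using False by (auto simp: RL_pre_left_def RL_int_left_def V_def G_def)
    have Vd: "(V has_real_derivative G * w s) (at s within {a..b})" if "s \<in> {a..b}" for s
    proof -
      have "((\<lambda>t. V t / G) has_real_derivative w s) (at s within {a..b})"
        using ud that unfolding has_RL_deriv_left_def pre by auto
      then have "((\<lambda>t. G * (V t / G)) has_real_derivative G * w s) (at s within {a..b})"
        by (rule DERIV_cmult)
      then show ?thesis using G0 by simp
    qed
    have uint: "(\<lambda>s. (x - s) powr (- \<beta>) * u s) integrable_on {a..x}" if x: "x \<in> {a..b}" for x
    proof -
      have "(\<lambda>s. u s * (x - s) powr (- \<beta>)) integrable_on {a..x}"
        by (rule prod_cont_int[OF continuous_on_subset[OF uc]]) (use kerL[of a x \<beta>] x b1' in auto)
      then show ?thesis by (simp add: mult.commute)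
    qed
    have Beq: "Beta (\<beta> + 1) (1 - \<beta>) = Gamma (\<beta> + 1) * G"
      by (simp add: Beta_def G_def Gamma_numeral)
    have up: "u t \<le> G * M / Beta (\<beta> + 1) (1 - \<beta>) * (t - a) powr \<beta>"
    proof (rule beta_side[OF ab b0 b1' uc, of "\<lambda>s. G * w s"])
      show "((\<lambda>t. integral {a..t} (\<lambda>s. (t - s) powr (- \<beta>) * u s)) has_real_derivative G * w s) (at s within {a..b})"
        if "s \<in> {a..b}" for s using Vd[OF that] unfolding V_def .
      show "G * w s \<le> G * M" if "s \<in> {a<..<b}" for s
        using wM[OF that] G0 by (intro mult_left_mono) (auto simp: abs_le_iff)
    qed (use t in auto)
    have lo: "- u t \<le> G * M / Beta (\<beta> + 1) (1 - \<beta>) * (t - a) powr \<beta>"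
    proof (rule beta_side[OF ab b0 b1', of "\<lambda>s. - u s" "\<lambda>s. - (G * w s)"])
      show "continuous_on {a..b} (\<lambda>s. - u s)" by (intro continuous_intros uc)
      fix s assume s: "s \<in> {a..b}"
      have "(\<lambda>x. integral {a..x} (\<lambda>s. (x - s) powr (- \<beta>) * - u s)) = (\<lambda>x. - V x)"
        by (rule ext) (simp add: V_def integral_neg)
      then show "((\<lambda>x. integral {a..x} (\<lambda>s. (x - s) powr (- \<beta>) * - u s)) has_real_derivative - (G * w s))
          (at s within {a..b})"
        using Vd[OF s] by (auto intro!: derivative_eq_intros)
    next
      fix s assume s: "s \<in> {a<..<b}"
      have "G * (- w s) \<le> G * M" using wM[OF s] G0 by (intro mult_left_mono) (auto simp: abs_le_iff)
      then show "- (G * w s) \<le> G * M" by simp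
    qed (use t in auto)
    have "G * M / Beta (\<beta> + 1) (1 - \<beta>) = M / Gamma (\<beta> + 1)" using Beq G0 by simp
    then have "\<bar>u t\<bar> \<le> M / Gamma (\<beta> + 1) * (t - a) powr \<beta>" using up lo by (simp add: abs_le_iff)
    also have "\<dots> \<le> M / Gamma (\<beta> + 1) * (b - a) powr \<beta>"
      using t M0 Gp1 b0 by (intro mult_left_mono powr_mono2) auto
    finally show ?thesis by simp
  next
    case True
    have pre: "RL_pre_left \<beta> a u = u" using True by (simp add: RL_pre_left_def)
    have ud': "(u has_real_derivative w s) (at s)" if "s \<in> {a<..<b}" for s
    proof -
      have "(u has_real_derivative w s) (at s within {a..b})"
        using ud that unfolding has_RL_deriv_left_def pre by auto
      moreover have "at s within {a..b} = at s" using that by (intro at_within_Icc_at) auto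
      ultimately show ?thesis by simp
    qed
    have "u t \<le> M * (t - a) \<and> - u t \<le> M * (t - a)"
    proof (cases "t = a")
      case True then show ?thesis using ua by simp
    next
      case False
      then have at: "a < t" using t by auto
      have "M * a - u a \<le> M * t - u t"
      proof (rule DERIV_nonneg_imp_increasing_open[of a t "\<lambda>s. M * s - u s"])
        fix s assume "a < s" "s < t"
        then show "\<exists>y. ((\<lambda>s. M * s - u s) has_real_derivative y) (at s) \<and> 0 \<le> y"
          using ud'[of s] wM[of s] t by (intro exI[of _ "M - w s"]) (auto intro!: derivative_eq_intros)
      qed (use t in \<open>auto intro!: continuous_intros continuous_on_subset[OF uc]\<close>)
      moreover have "M * a + u a \<le> M * t + u t"
      proof (rule DERIV_nonneg_imp_increasing_open[of a t "\<lambda>s. M * s + u s"])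
        fix s assume "a < s" "s < t"
        then show "\<exists>y. ((\<lambda>s. M * s + u s) has_real_derivative y) (at s) \<and> 0 \<le> y"
          using ud'[of s] wM[of s] t by (intro exI[of _ "M + w s"]) (auto intro!: derivative_eq_intros)
      qed (use t in \<open>auto intro!: continuous_intros continuous_on_subset[OF uc]\<close>)
      ultimately show ?thesis using ua by (simp add: algebra_simps)
    qed
    moreover have "M * (t - a) \<le> M * (b - a)" using M0 t by (intro mult_left_mono) auto
    moreover have "Gamma (2::real) = 1" by (simp add: Gamma_numeral)
    ultimately show ?thesis using True ab by (simp add: abs_le_iff)
  qed
qed




theorem corollary6:
  fixes a b \<alpha> \<beta> lam :: real
  assumes "a < b"
    and "0 < \<alpha>" "\<alpha> \<le> 1" "0 < \<beta>" "\<beta> \<le> 1"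
    and "1 < \<alpha> + \<beta>" "\<alpha> + \<beta> \<le> 2"
    and "frac_eigenvalue \<alpha> \<beta> a b lam"
  shows "\<bar>lam\<bar> \<ge> (\<alpha> + \<beta> - 1) * Gamma \<alpha> * Gamma \<beta> / (b - a) powr (\<alpha> + \<beta>)"
proof -
  note ab = assms(1) and a0 = assms(2) and a1 = assms(3) and b0 = assms(4) and b1 = assms(5)
  obtain u w w' where uc: "continuous_on {a..b} u" and unz: "\<exists>t\<in>{a..b}. u t \<noteq> 0"
    and ud: "has_RL_deriv_left \<beta> a u w {a..b}" and wc: "continuous_on {a..b} w"
    and wd: "\<forall>t\<in>{a<..<b}. (w has_real_derivative w' t) (at t)"
    and wi: "\<alpha> < 1 \<longrightarrow> (\<forall>t\<in>{a<..<b}. (\<lambda>s. (s - t) powr (- \<alpha>) * w' s) integrable_on {t..b})"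
    and we: "\<forall>t\<in>{a<..<b}. caputo_right \<alpha> b w' t = lam * u t"
    and ua: "u a = 0" and wb: "w b = 0"
    using assms(8) unfolding frac_eigenvalue_def by blast
  have uac: "continuous_on {a..b} (\<lambda>t. \<bar>u t\<bar>)" by (intro continuous_intros uc)
  obtain tm where tm: "tm \<in> {a..b}" and tmax: "\<And>t. t \<in> {a..b} \<Longrightarrow> \<bar>u t\<bar> \<le> \<bar>u tm\<bar>"
    using continuous_attains_sup[OF compact_Icc _ uac] ab by fastforce
  define U where "U = \<bar>u tm\<bar>"
  have U0: "U > 0" using unz tmax unfolding U_def by force
  define m where "m = \<bar>lam\<bar> * U"
  have um: "\<bar>lam * u t\<bar> \<le> m" if "t \<in> {a..b}" for t
    using tmax[OF that] unfolding m_def U_def abs_mult by (intro mult_left_mono) auto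
  define M where "M = m * (b - a) powr \<alpha> / Gamma (\<alpha> + 1)"
  have wM: "\<bar>w t\<bar> \<le> M" if "t \<in> {a<..<b}" for t
    unfolding M_def by (rule alpha_bound[OF ab a0 a1 wc wb wd wi we um that])
  have "U \<le> M * (b - a) powr \<beta> / Gamma (\<beta> + 1)"
    unfolding U_def by (rule beta_bound[OF ab b0 b1 uc ua ud wM tm])
  have Ga: "Gamma (\<alpha> + 1) = \<alpha> * Gamma \<alpha>" using a0 by (intro Gamma_plus1) (auto elim!: nonpos_Ints_cases)
  have Gb: "Gamma (\<beta> + 1) = \<beta> * Gamma \<beta>" using b0 by (intro Gamma_plus1) (auto elim!: nonpos_Ints_cases)
  have Gap: "Gamma \<alpha> > 0" "Gamma \<beta> > 0" using a0 b0 by (auto intro!: Gamma_real_pos)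
  have Gap1: "Gamma (\<alpha> + 1) > 0" "Gamma (\<beta> + 1) > 0" using a0 b0 by (auto intro!: Gamma_real_pos)
  have pw: "(b - a) powr (\<alpha> + \<beta>) = (b - a) powr \<alpha> * (b - a) powr \<beta>" by (simp add: powr_add)
  have pw0: "(b - a) powr (\<alpha> + \<beta>) > 0" using ab by simp
  define X where "X = \<bar>lam\<bar> * (b - a) powr (\<alpha> + \<beta>) / (Gamma (\<alpha> + 1) * Gamma (\<beta> + 1))"
  have "M * (b - a) powr \<beta> / Gamma (\<beta> + 1) = U * X"
    unfolding M_def m_def X_def pw by (simp add: field_simps)
  then have "U * 1 \<le> U * X" using \<open>U \<le> _\<close> by simp
  then have "1 \<le> X" using U0 by (simp only: mult_le_cancel_left_pos)
  then have "1 \<le> \<bar>lam\<bar> * (b - a) powr (\<alpha> + \<beta>) / (Gamma (\<alpha> + 1) * Gamma (\<beta> + 1))"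
    by (simp add: X_def)
  then have k: "Gamma (\<alpha> + 1) * Gamma (\<beta> + 1) \<le> \<bar>lam\<bar> * (b - a) powr (\<alpha> + \<beta>)"
    using Gap1 by (simp add: pos_le_divide_eq mult_pos_pos)
  have "(\<alpha> + \<beta> - 1) \<le> \<alpha> * \<beta>"
  proof -
    have "0 \<le> (1 - \<alpha>) * (1 - \<beta>)" using a1 b1 by simp
    then show ?thesis by (simp add: algebra_simps)
  qed
  then have "(\<alpha> + \<beta> - 1) * Gamma \<alpha> * Gamma \<beta> \<le> (\<alpha> * \<beta>) * Gamma \<alpha> * Gamma \<beta>"
    using Gap by (intro mult_right_mono) auto
  also have "\<dots> = Gamma (\<alpha> + 1) * Gamma (\<beta> + 1)" using Ga Gb by simp
  also have "\<dots> \<le> \<bar>lam\<bar> * (b - a) powr (\<alpha> + \<beta>)" by (rule k)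
  finally have fin: "(\<alpha> + \<beta> - 1) * Gamma \<alpha> * Gamma \<beta> \<le> \<bar>lam\<bar> * (b - a) powr (\<alpha> + \<beta>)" .
  show ?thesis by (simp only: pos_divide_le_eq[OF pw0] fin)
qed


end
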